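(* Let $U\in\mathbb{R}^{n\times d}$, $\mathbf{y}\in\mathbb{R}^n$, $\mathbf{x}_t\in\mathbb{R}^d$, $\lambda_t>0$, and \[ \mathbf{x}_{t+1}=\arg\min_{\mathbf{x}\in\mathbb{R}^d}\frac12\left\|\mathbf{x}-\big(\mathbf{x}_t-U^\top(U\mathbf{x}_t-\mathbf{y})\big)\right\|_2^2+\lambda_t\|\mathbf{x}\|_1 . \] Then for any $s$-sparse vector $\mathbf{x}\in\mathbb{R}^d$, \[ \|\mathbf{x}_{t+1}-\mathbf{x}\|_2^2\le\lambda_t\sqrt s\|\mathbf{x}_{t+1}-\mathbf{x}\|_2+\left|(\mathbf{x}_{t+1}-\mathbf{x})^\top\big(U^\top(U\mathbf{x}_t-\mathbf{y})-(\mathbf{x}_t-\mathbf{x})\big)\right| . \]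
   Context: A vector is $s$-sparse if it has at most $s$ nonzero entries. *)

theory Defs
  imports "HOL-Analysis.Analysis"
begin

definition l1norm :: "real ^ 'd \<Rightarrow> real" where
  "l1norm x = (\<Sum>i\<in>UNIV. \<bar>x $ i\<bar>)"

definition sparse :: "nat \<Rightarrow> real ^ 'd \<Rightarrow> bool" where
  "sparse s x \<longleftrightarrow> card {i. x $ i \<noteq> 0} \<le> s"

end

theory Submission
  imports Defs
begin

lemma l1_sparse_bound:
  fixes x z :: "real ^ 'd"
  assumes sp: "sparse s x"
  shows "l1norm x - l1norm z \<le> sqrt (real s) * norm (z - x)"
proof -
  define S where "S = {i. x $ i \<noteq> 0}"
  have cS: "card S \<le> s" using sp unfolding sparse_def S_def .
  have "l1norm x - l1norm z = (\<Sum>i\<in>UNIV. \<bar>x $ i\<bar> - \<bar>z $ i\<bar>)"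
    unfolding l1norm_def by (simp add: sum_subtractf)
  also have "\<dots> \<le> (\<Sum>i\<in>UNIV. if i \<in> S then \<bar>(z - x) $ i\<bar> else 0)"
    by (rule sum_mono) (auto simp: S_def)
  also have "\<dots> = (\<Sum>i\<in>S. \<bar>(z - x) $ i\<bar> * \<bar>1\<bar>)"
    by (simp add: sum.If_cases)
  also have "\<dots> \<le> L2_set (\<lambda>i. (z - x) $ i) S * L2_set (\<lambda>i. 1) S"
    by (rule L2_set_mult_ineq)
  also have "\<dots> = L2_set (\<lambda>i. (z - x) $ i) S * sqrt (real (card S))"
    by (simp add: L2_set_constant)
  also have "\<dots> \<le> norm (z - x) * sqrt (real s)"
  proof (rule mult_mono)
    have "(\<Sum>i\<in>S. ((z - x) $ i)\<^sup>2) \<le> (\<Sum>i\<in>UNIV. ((z - x) $ i)\<^sup>2)"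
      by (rule sum_mono2) auto
    then show "L2_set (\<lambda>i. (z - x) $ i) S \<le> norm (z - x)"
      unfolding norm_vec_def L2_set_def by simp
    show "sqrt (real (card S)) \<le> sqrt (real s)" using cS by simp
  qed auto
  finally show ?thesis by (simp add: mult.commute)
qed

lemma small_le0:
  fixes a c :: real
  assumes "c \<ge> 0" and h: "\<And>t. 0 < t \<Longrightarrow> t \<le> 1 \<Longrightarrow> a \<le> t * c"
  shows "a \<le> 0"
proof (rule ccontr)
  assume "\<not> a \<le> 0"
  hence a: "a > 0" by simp
  define t where "t = min 1 (a / (2 * (c + 1)))"
  have t0: "0 < t" using a assms(1) by (simp add: t_def)
  have t1: "t \<le> 1" by (simp add: t_def)
  have "t * c \<le> a / (2 * (c + 1)) * c"
    using assms(1) by (intro mult_right_mono) (auto simp: t_def)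
  also have "\<dots> < a" using a assms(1) by (simp add: field_simps) (smt (verit) mult_nonneg_nonneg)
  finally show False using h[OF t0 t1] by simp
qed

lemma l1_convex:
  fixes a b :: "real ^ 'd"
  assumes "0 \<le> t" "t \<le> 1"
  shows "l1norm (a + t *\<^sub>R (b - a)) \<le> (1 - t) * l1norm a + t * l1norm b"
proof -
  have "l1norm (a + t *\<^sub>R (b - a)) = (\<Sum>i\<in>UNIV. \<bar>(1 - t) * a $ i + t * b $ i\<bar>)"
    unfolding l1norm_def by (simp add: algebra_simps)
  also have "\<dots> \<le> (\<Sum>i\<in>UNIV. (1 - t) * \<bar>a $ i\<bar> + t * \<bar>b $ i\<bar>)"
  proof (rule sum_mono)
    fix i
    have "\<bar>(1 - t) * a $ i + t * b $ i\<bar> \<le> \<bar>(1 - t) * a $ i\<bar> + \<bar>t * b $ i\<bar>"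
      by (rule abs_triangle_ineq)
    also have "\<dots> = (1 - t) * \<bar>a $ i\<bar> + t * \<bar>b $ i\<bar>"
      using assms by (simp add: abs_mult)
    finally show "\<bar>(1 - t) * a $ i + t * b $ i\<bar> \<le> (1 - t) * \<bar>a $ i\<bar> + t * \<bar>b $ i\<bar>" .
  qed
  also have "\<dots> = (1 - t) * l1norm a + t * l1norm b"
    unfolding l1norm_def by (simp add: sum.distrib sum_distrib_left)
  finally show ?thesis .
qed

theorem lemma1:
  fixes U :: "real ^ 'd ^ 'n" and y :: "real ^ 'n" and xt xt1 x :: "real ^ 'd"
    and lam :: real and s :: nat
  assumes lam_pos: "lam > 0"
    and argmin: "is_arg_min (\<lambda>z. (1/2) * (norm (z - (xt - transpose U *v (U *v xt - y))))\<^sup>2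
                              + lam * l1norm z) (\<lambda>_. True) xt1"
    and sp: "sparse s x"
  shows "(norm (xt1 - x))\<^sup>2 \<le> lam * sqrt (real s) * norm (xt1 - x)
           + \<bar>(xt1 - x) \<bullet> (transpose U *v (U *v xt - y) - (xt - x))\<bar>"
proof -
  define g where "g = transpose U *v (U *v xt - y)"
  define v where "v = xt - g"
  define e where "e = xt1 - x"
  define F where "F = (\<lambda>z. (1/2) * (norm (z - v))\<^sup>2 + lam * l1norm z)"
  have min: "F xt1 \<le> F z" for z
    using argmin unfolding is_arg_min_def F_def v_def g_def by (metis not_less)
  define a where "a = - (e \<bullet> (xt1 - v)) + lam * (l1norm x - l1norm xt1)"
  have key: "- a \<le> t * ((1/2) * (norm e)\<^sup>2)" if t: "0 < t" "t \<le> 1" for t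
  proof -
    define zt where "zt = xt1 + t *\<^sub>R (x - xt1)"
    have q: "(norm (zt - v))\<^sup>2 = (norm (xt1 - v))\<^sup>2 - 2 * t * (e \<bullet> (xt1 - v)) + t\<^sup>2 * (norm e)\<^sup>2"
    proof -
      have "zt - v = (xt1 - v) - t *\<^sub>R e" by (simp add: zt_def e_def algebra_simps)
      then have "(norm (zt - v))\<^sup>2 = ((xt1 - v) - t *\<^sub>R e) \<bullet> ((xt1 - v) - t *\<^sub>R e)"
        by (simp only: power2_norm_eq_inner)
      also have "\<dots> = (xt1 - v) \<bullet> (xt1 - v) - 2 * t * (e \<bullet> (xt1 - v)) + t\<^sup>2 * (e \<bullet> e)"
        by (simp add: inner_diff_left inner_diff_right inner_commute power2_eq_square algebra_simps)
      finally show ?thesis by (simp add: power2_norm_eq_inner)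
    qed
    have l: "l1norm zt \<le> (1 - t) * l1norm xt1 + t * l1norm x"
      unfolding zt_def using t by (intro l1_convex) auto
    have m: "F xt1 \<le> F zt" by (rule min)
    have ll: "lam * l1norm zt \<le> lam * ((1 - t) * l1norm xt1 + t * l1norm x)"
      using l lam_pos by (intro mult_left_mono) auto
    have "0 \<le> (1/2) * (- 2 * t * (e \<bullet> (xt1 - v)) + t\<^sup>2 * (norm e)\<^sup>2)
              + lam * ((1 - t) * l1norm xt1 + t * l1norm x) - lam * l1norm xt1"
      using m ll unfolding F_def q by (simp add: algebra_simps)
    hence "0 \<le> t * (a + t * ((1/2) * (norm e)\<^sup>2))"
      unfolding a_def by (simp add: algebra_simps power2_eq_square)
    then show ?thesis using t by (simp add: zero_le_mult_iff)
  qed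
  have a0: "- a \<le> 0" by (rule small_le0[OF _ key]) auto
  have b: "l1norm x - l1norm xt1 \<le> sqrt (real s) * norm e"
    unfolding e_def by (rule l1_sparse_bound[OF sp])
  have "xt1 - v = e + (g - (xt - x))" by (simp add: e_def v_def algebra_simps)
  hence ex: "e \<bullet> (xt1 - v) = (norm e)\<^sup>2 + e \<bullet> (g - (xt - x))"
    by (simp add: inner_add_right power2_norm_eq_inner)
  have "(norm e)\<^sup>2 \<le> lam * (l1norm x - l1norm xt1) - e \<bullet> (g - (xt - x))"
    using a0 ex unfolding a_def by simp
  also have "\<dots> \<le> lam * sqrt (real s) * norm e + \<bar>e \<bullet> (g - (xt - x))\<bar>"
    using b lam_pos by (smt (verit) mult_left_mono mult.assoc abs_ge_minus_self)
  finally show ?thesis unfolding e_def g_def .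
qed

end
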